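(* Let $i\in I$ and let $\xi\in\mathscr C$ satisfy $D_i^\#(\xi)=\xi$. Then $\xi$ is a $\mathbb C$-linear combination of elements of the form $f\otimes t_\beta+s_i(f)\otimes t_{s_i\beta}$ with $f\in\mathbb C(P)$, $\beta\in Q^\vee$.
   Context: $G$ is a simply connected simple algebraic group over $\mathbb C$ with maximal torus $H$, Weyl group $W$, weight lattice $P$, simple roots $\alpha_i$ and simple reflections $s_i$ ($i\in I$), coroot lattice $Q^\vee$ (on which $W$ acts). $\mathbb C(P)$ is the fraction field of the group algebra $\mathbb CP$ (basis $e^\lambda$), with $W$ acting by $w(e^\lambda)=e^{w\lambda}$. $\mathscr C=\mathbb C(P)\otimes\mathbb CQ^\vee$, with basis symbols $t_\beta$ ($\beta\in Q^\vee$), is the commutative algebra with $(f\otimes t_\beta)(g\otimes t_\gamma)=fg\otimes t_{\beta+\gamma}$. For $i\in I$, $D_i^\#$ is the $\mathbb C$-linear operator on $\mathscr C$ given by $$D_i^\#(f\otimes t_\beta)=\frac{f}{1-e^{\alpha_i}}\otimes t_\beta-\frac{e^{\alpha_i}s_i(f)}{1-e^{\alpha_i}}\otimes t_{s_i\beta}.$$ *)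

theory Defs
  imports Complex_Main "HOL-Library.Poly_Mapping" "HOL-Computational_Algebra.Fraction_Field"
begin

(* Index set I: a finite type 'i (a linear order on it is a harmless technical
   device needed for the integral-domain instance of the group algebra).
   Cartan matrix A, Kac convention:  A i j = <alpha_i^vee, alpha_j>.            *)

definition gen_cartan :: "('i::finite \<Rightarrow> 'i \<Rightarrow> int) \<Rightarrow> bool" where
  "gen_cartan A \<longleftrightarrow> (\<forall>i. A i i = 2) \<and> (\<forall>i j. i \<noteq> j \<longrightarrow> A i j \<le> 0)
     \<and> (\<forall>i j. A i j = 0 \<longleftrightarrow> A j i = 0)"

definition finite_type_cartan :: "('i::finite \<Rightarrow> 'i \<Rightarrow> int) \<Rightarrow> bool" where
  "finite_type_cartan A \<longleftrightarrow> gen_cartan A \<and>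
     (\<exists>d :: 'i \<Rightarrow> real. (\<forall>i. d i > 0) \<and> (\<forall>i j. d i * A i j = d j * A j i) \<and>
        (\<forall>x :: 'i \<Rightarrow> real. (\<exists>i. x i \<noteq> 0) \<longrightarrow> (\<Sum>i\<in>UNIV. \<Sum>j\<in>UNIV. x i * d i * A i j * x j) > 0))"

definition indecomposable_cartan :: "('i::finite \<Rightarrow> 'i \<Rightarrow> int) \<Rightarrow> bool" where
  "indecomposable_cartan A \<longleftrightarrow>
     \<not> (\<exists>J K. J \<noteq> {} \<and> K \<noteq> {} \<and> J \<inter> K = {} \<and> J \<union> K = UNIV \<and>
            (\<forall>j\<in>J. \<forall>k\<in>K. A j k = 0))"

(* weight lattice P of simply connected G: coordinates w.r.t. fundamental weights *)
type_synonym 'i wt = "'i \<Rightarrow>\<^sub>0 int"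
(* coroot lattice Q^vee: coordinates w.r.t. simple coroots *)
type_synonym 'i cowt = "'i \<Rightarrow>\<^sub>0 int"
(* group algebra CP and its fraction field C(P) *)
type_synonym 'i grp = "'i wt \<Rightarrow>\<^sub>0 complex"
type_synonym 'i CP = "'i grp fract"
(* the algebra  C(P) \<otimes> CQ^vee  = finitely supported  Q^vee \<rightarrow> C(P);
   f \<otimes> t_beta  is  Poly_Mapping.single beta f *)
type_synonym 'i Cs = "'i cowt \<Rightarrow>\<^sub>0 'i CP"

(* simple root alpha_i = sum_j <alpha_j^vee, alpha_i> omega_j *)
definition simple_root :: "('i::finite \<Rightarrow> 'i \<Rightarrow> int) \<Rightarrow> 'i \<Rightarrow> 'i wt" where
  "simple_root A i = (\<Sum>j\<in>UNIV. Poly_Mapping.single j (A j i))"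

(* s_i lambda = lambda - <lambda, alpha_i^vee> alpha_i *)
definition s_wt :: "('i::finite \<Rightarrow> 'i \<Rightarrow> int) \<Rightarrow> 'i \<Rightarrow> 'i wt \<Rightarrow> 'i wt" where
  "s_wt A i lam = lam - (\<Sum>j\<in>UNIV. Poly_Mapping.single j (Poly_Mapping.lookup lam i * A j i))"

(* s_i beta = beta - <alpha_i, beta> alpha_i^vee *)
definition s_cowt :: "('i::finite \<Rightarrow> 'i \<Rightarrow> int) \<Rightarrow> 'i \<Rightarrow> 'i cowt \<Rightarrow> 'i cowt" where
  "s_cowt A i beta = beta - Poly_Mapping.single i (\<Sum>j\<in>UNIV. Poly_Mapping.lookup beta j * A j i)"

definition ex :: "'i::linorder wt \<Rightarrow> 'i CP" where
  "ex lam = Fract (Poly_Mapping.single lam 1) 1"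

definition cst :: "complex \<Rightarrow> 'i::linorder CP" where
  "cst c = Fract (Poly_Mapping.single 0 c) 1"

definition s_grp :: "('i::{finite,linorder} \<Rightarrow> 'i \<Rightarrow> int) \<Rightarrow> 'i \<Rightarrow> 'i grp \<Rightarrow> 'i grp" where
  "s_grp A i p = (\<Sum>lam\<in>Poly_Mapping.keys p. Poly_Mapping.single (s_wt A i lam) (Poly_Mapping.lookup p lam))"

definition s_CP :: "('i::{finite,linorder} \<Rightarrow> 'i \<Rightarrow> int) \<Rightarrow> 'i \<Rightarrow> 'i CP \<Rightarrow> 'i CP" where
  "s_CP A i f = (THE g. \<forall>a b. b \<noteq> 0 \<longrightarrow> f = Fract a b \<longrightarrow> g = Fract (s_grp A i a) (s_grp A i b))"

definition Dsharp :: "('i::{finite,linorder} \<Rightarrow> 'i \<Rightarrow> int) \<Rightarrow> 'i \<Rightarrow> 'i Cs \<Rightarrow> 'i Cs" where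
  "Dsharp A i xi = (\<Sum>beta\<in>Poly_Mapping.keys xi.
      Poly_Mapping.single beta (Poly_Mapping.lookup xi beta / (1 - ex (simple_root A i)))
    - Poly_Mapping.single (s_cowt A i beta)
        (ex (simple_root A i) * s_CP A i (Poly_Mapping.lookup xi beta) / (1 - ex (simple_root A i))))"

end

theory Submission
  imports Defs
begin

lemma s_cowt_invol:
  fixes A :: "'i::finite \<Rightarrow> 'i \<Rightarrow> int"
  assumes "A i i = 2"
  shows "s_cowt A i (s_cowt A i b) = b"
proof -
  define c where "c = (\<Sum>j\<in>UNIV. Poly_Mapping.lookup b j * A j i)"
  have sb: "s_cowt A i b = b - Poly_Mapping.single i c" by (simp add: s_cowt_def c_def)
  have "(\<Sum>j\<in>UNIV. Poly_Mapping.lookup (b - Poly_Mapping.single i c) j * A j i)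
      = (\<Sum>j\<in>UNIV. Poly_Mapping.lookup b j * A j i - (if j = i then c * A i i else 0))"
    by (rule sum.cong) (auto simp: lookup_minus lookup_single when_def left_diff_distrib)
  also have "\<dots> = c - c * A i i" by (simp add: sum_subtractf c_def)
  also have "\<dots> = - c" using assms by simp
  finally have "(\<Sum>j\<in>UNIV. Poly_Mapping.lookup (s_cowt A i b) j * A j i) = - c" by (simp add: sb)
  moreover have "s_cowt A i (s_cowt A i b) = s_cowt A i b - Poly_Mapping.single i (\<Sum>j\<in>UNIV. Poly_Mapping.lookup (s_cowt A i b) j * A j i)"
    by (rule s_cowt_def)
  ultimately show ?thesis by (simp add: sb single_uminus)
qed

lemma ex_nonzero: "ex lam \<noteq> (0 :: 'i::linorder CP)"
proof -
  have "Poly_Mapping.single lam (1::complex) \<noteq> 0"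
    by (metis lookup_single_eq lookup_zero one_neq_zero)
  then show ?thesis by (simp add: ex_def Zero_fract_def eq_fract)
qed

lemma sum_single_keys: "(\<Sum>b\<in>Poly_Mapping.keys x. Poly_Mapping.single b (Poly_Mapping.lookup x b)) = x"
  by (rule poly_mapping_eqI)
     (simp add: lookup_sum lookup_single when_def sum.delta' in_keys_iff)

lemma half_cst: "Poly_Mapping.single 0 (cst (1/2)) + Poly_Mapping.single 0 (cst (1/2)) = (1 :: 'i::{finite,linorder} Cs)"
proof -
  have "cst (1/2) + cst (1/2) = (1 :: 'i CP)"
    by (simp add: cst_def single_add[symmetric] One_fract_def)
  then have "Poly_Mapping.single 0 (cst (1/2) + cst (1/2)) = (1 :: 'i Cs)" by simp
  then show ?thesis by (simp only: single_add)
qed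

theorem corollary2p4:
  fixes A :: "'i::{finite,linorder} \<Rightarrow> 'i \<Rightarrow> int" and i :: 'i and xi :: "'i Cs"
  assumes "finite_type_cartan A" and "indecomposable_cartan A"
    and "Dsharp A i xi = xi"
  shows "\<exists>(n::nat) (c :: nat \<Rightarrow> complex) (f :: nat \<Rightarrow> 'i CP) (b :: nat \<Rightarrow> 'i cowt).
           xi = (\<Sum>k<n. Poly_Mapping.single 0 (cst (c k)) *
                   (Poly_Mapping.single (b k) (f k)
                    + Poly_Mapping.single (s_cowt A i (b k)) (s_CP A i (f k))))"
proof -
  have Aii: "A i i = 2" using assms(1) by (simp add: finite_type_cartan_def gen_cartan_def)
  define s where "s = s_cowt A i"
  have inv: "s (s b) = b" for b unfolding s_def by (rule s_cowt_invol, rule Aii)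
  define a where "a = ex (simple_root A i)"
  define K where "K = Poly_Mapping.keys xi"
  define T where "T = (\<Sum>b\<in>K. Poly_Mapping.single (s b) (s_CP A i (Poly_Mapping.lookup xi b)))"
  have a0: "a \<noteq> 0" unfolding a_def by (rule ex_nonzero)
  have lkS: "Poly_Mapping.lookup (\<Sum>b\<in>K. Poly_Mapping.single (s b) (h b)) g
      = (if s g \<in> K then h (s g) else 0)" for h :: "'i cowt \<Rightarrow> 'i CP" and g
  proof -
    have "Poly_Mapping.lookup (\<Sum>b\<in>K. Poly_Mapping.single (s b) (h b)) g
        = (\<Sum>b\<in>K. if b = s g then h b else 0)"
      unfolding lookup_sum lookup_single when_def
      by (rule sum.cong[OF refl]) (metis inv)
    also have "\<dots> = (if s g \<in> K then h (s g) else 0)"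
      by (simp add: sum.delta' K_def)
    finally show ?thesis .
  qed
  have TX: "T = xi"
  proof (cases "1 - a = 0")
    case True
    have "Dsharp A i xi = 0" unfolding Dsharp_def a_def[symmetric] True by simp
    with assms(3) have "xi = 0" by simp
    then show ?thesis by (simp add: T_def K_def)
  next
    case False
    show ?thesis
    proof (rule poly_mapping_eqI)
      fix g
      define L where "L = (if s g \<in> K then s_CP A i (Poly_Mapping.lookup xi (s g)) else 0)"
      have lT: "Poly_Mapping.lookup T g = L" unfolding T_def L_def by (rule lkS)
      have D: "Dsharp A i xi = (\<Sum>b\<in>K. Poly_Mapping.single b (Poly_Mapping.lookup xi b / (1 - a)))
          - (\<Sum>b\<in>K. Poly_Mapping.single (s b) (a * s_CP A i (Poly_Mapping.lookup xi b) / (1 - a)))"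
        unfolding Dsharp_def a_def[symmetric] s_def[symmetric] K_def by (simp add: sum_subtractf)
      have l1: "Poly_Mapping.lookup (\<Sum>b\<in>K. Poly_Mapping.single b (Poly_Mapping.lookup xi b / (1 - a))) g
          = Poly_Mapping.lookup xi g / (1 - a)"
        by (simp add: lookup_sum lookup_single when_def sum.delta' K_def in_keys_iff)
      have l2: "Poly_Mapping.lookup (\<Sum>b\<in>K. Poly_Mapping.single (s b) (a * s_CP A i (Poly_Mapping.lookup xi b) / (1 - a))) g
          = a * L / (1 - a)"
        by (simp add: lkS L_def)
      have "Poly_Mapping.lookup xi g = Poly_Mapping.lookup xi g / (1 - a) - a * L / (1 - a)"
        using arg_cong[OF assms(3), of "\<lambda>p. Poly_Mapping.lookup p g"] D l1 l2
        by (simp add: lookup_minus)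
      then have "Poly_Mapping.lookup xi g * (1 - a) = Poly_Mapping.lookup xi g - a * L"
        using False by (simp add: field_simps)
      then have "Poly_Mapping.lookup xi g = L" using a0 by (auto simp: algebra_simps)
      then show "Poly_Mapping.lookup T g = Poly_Mapping.lookup xi g" using lT by simp
    qed
  qed
  obtain h where h: "bij_betw h {0..<card K} K"
    using ex_bij_betw_nat_finite[of K] by (auto simp: K_def)
  let ?F = "\<lambda>b. Poly_Mapping.single 0 (cst (1/2)) *
                   (Poly_Mapping.single b (Poly_Mapping.lookup xi b)
                    + Poly_Mapping.single (s_cowt A i b) (s_CP A i (Poly_Mapping.lookup xi b)))"
  have "(\<Sum>k<card K. ?F (h k)) = (\<Sum>b\<in>K. ?F b)"
    using sum.reindex_bij_betw[OF h, of ?F] by (simp add: atLeast0LessThan)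
  also have "\<dots> = Poly_Mapping.single 0 (cst (1/2)) * (xi + T)"
    by (simp add: sum_distrib_left[symmetric] sum.distrib T_def s_def K_def sum_single_keys)
  also have "\<dots> = (Poly_Mapping.single 0 (cst (1/2)) + Poly_Mapping.single 0 (cst (1/2))) * xi"
    by (simp add: TX algebra_simps)
  also have "\<dots> = xi" by (simp add: half_cst)
  finally show ?thesis
    by (intro exI[of _ "card K"] exI[of _ "\<lambda>_. 1/2"] exI[of _ "\<lambda>k. Poly_Mapping.lookup xi (h k)"] exI[of _ h]) simp
qed

end
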